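(* Let $X$ be a complex Banach space with open unit ball $B$ and let $Y$ be a closed subspace of $X$ with open unit ball $B_Y$. Then for every $f\in A_u(B)$, $$\widehat{f|_{B_Y}}\big(M_0(B_Y)\big)\subset \hat f\big(M_0(B)\big).$$
   Context: For a Banach space $Z$ with open unit ball $B_Z$, $A_u(B_Z)$ is the uniform algebra of bounded holomorphic functions on $B_Z$ that are uniformly continuous; $M_0(B_Z)$ is the set of nonzero multiplicative linear functionals $\tau$ on $A_u(B_Z)$ with $\tau(z^* )=0$ for every $z^*\in Z^*$; $\hat g(\tau)=\tau(g)$. *)

theory Defs
  imports "HOL-Analysis.Analysis"
begin

text \<open>A complex Banach space is modelled as a real Banach space 'a together with a
  complex scalar multiplication sm extending the real one and compatible with the norm.\<close>

definition complex_scaling :: "(complex \<Rightarrow> 'a::real_normed_vector \<Rightarrow> 'a) \<Rightarrow> bool" where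
  "complex_scaling sm \<longleftrightarrow>
     (\<forall>a x y. sm a (x + y) = sm a x + sm a y) \<and>
     (\<forall>a b x. sm (a + b) x = sm a x + sm b x) \<and>
     (\<forall>a b x. sm (a * b) x = sm a (sm b x)) \<and>
     (\<forall>r x. sm (complex_of_real r) x = r *\<^sub>R x) \<and>
     (\<forall>a x. norm (sm a x) = cmod a * norm x)"

definition complex_subspace :: "(complex \<Rightarrow> 'a::real_normed_vector \<Rightarrow> 'a) \<Rightarrow> 'a set \<Rightarrow> bool" where
  "complex_subspace sm V \<longleftrightarrow> 0 \<in> V \<and> (\<forall>x\<in>V. \<forall>y\<in>V. x + y \<in> V) \<and> (\<forall>a. \<forall>x\<in>V. sm a x \<in> V)"

definition uball :: "'a::real_normed_vector set \<Rightarrow> 'a set" where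
  "uball V = ball 0 1 \<inter> V"

definition cdual :: "(complex \<Rightarrow> 'a::real_normed_vector \<Rightarrow> 'a) \<Rightarrow> 'a set \<Rightarrow> ('a \<Rightarrow> complex) set" where
  "cdual sm V = {L. (\<forall>v\<in>V. \<forall>w\<in>V. L (v + w) = L v + L w) \<and>
                    (\<forall>a. \<forall>v\<in>V. L (sm a v) = a * L v) \<and>
                    (\<exists>C. \<forall>v\<in>V. cmod (L v) \<le> C * norm v)}"

definition holo_on :: "(complex \<Rightarrow> 'a::real_normed_vector \<Rightarrow> 'a) \<Rightarrow> 'a set \<Rightarrow> 'a set \<Rightarrow> ('a \<Rightarrow> complex) \<Rightarrow> bool" where
  "holo_on sm V U g \<longleftrightarrow>
     (\<forall>x\<in>U. \<exists>L\<in>cdual sm V.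
        ((\<lambda>y. cmod (g y - g x - L (y - x)) / norm (y - x)) \<longlongrightarrow> 0) (at x within V))"

definition restr :: "'a set \<Rightarrow> ('a \<Rightarrow> complex) \<Rightarrow> 'a \<Rightarrow> complex" where
  "restr S g = (\<lambda>x. if x \<in> S then g x else 0)"

text \<open>A_u(B_V): bounded, uniformly continuous, holomorphic functions on the open unit ball
  of V; functions are normalised to be 0 outside the ball.\<close>
definition Au :: "(complex \<Rightarrow> 'a::real_normed_vector \<Rightarrow> 'a) \<Rightarrow> 'a set \<Rightarrow> ('a \<Rightarrow> complex) set" where
  "Au sm V = {g. (\<forall>x. x \<notin> uball V \<longrightarrow> g x = 0) \<and> bounded (g ` uball V) \<and>
                 uniformly_continuous_on (uball V) g \<and> holo_on sm V (uball V) g}"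

definition M0 :: "(complex \<Rightarrow> 'a::real_normed_vector \<Rightarrow> 'a) \<Rightarrow> 'a set \<Rightarrow> (('a \<Rightarrow> complex) \<Rightarrow> complex) set" where
  "M0 sm V = {\<tau>. (\<forall>f\<in>Au sm V. \<forall>g\<in>Au sm V.
                     \<tau> (\<lambda>x. f x + g x) = \<tau> f + \<tau> g \<and> \<tau> (\<lambda>x. f x * g x) = \<tau> f * \<tau> g) \<and>
                 (\<forall>c. \<forall>f\<in>Au sm V. \<tau> (\<lambda>x. c * f x) = c * \<tau> f) \<and>
                 (\<exists>f\<in>Au sm V. \<tau> f \<noteq> 0) \<and>
                 (\<forall>\<phi>\<in>cdual sm V. \<tau> (restr (uball V) \<phi>) = 0)}"

end

theory Submission
  imports Defs
begin

lemma uc_sub_cong: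
  fixes g h :: "'a::metric_space \<Rightarrow> 'b::metric_space"
  assumes "uniformly_continuous_on T g" "S \<subseteq> T" "\<And>x. x \<in> S \<Longrightarrow> h x = g x"
  shows "uniformly_continuous_on S h"
  unfolding uniformly_continuous_on_def
proof (intro allI impI)
  fix e :: real assume "e > 0"
  then obtain d where d: "d > 0" "\<forall>x\<in>T. \<forall>x'\<in>T. dist x' x < d \<longrightarrow> dist (g x') (g x) < e"
    using assms(1) unfolding uniformly_continuous_on_def by blast
  show "\<exists>d>0. \<forall>x\<in>S. \<forall>x'\<in>S. dist x' x < d \<longrightarrow> dist (h x') (h x) < e"
    using d assms(2,3) by (intro exI[of _ d]) auto
qed

lemma restr_Au:
  assumes g: "g \<in> Au sm UNIV"
  shows "restr (uball Y) g \<in> Au sm Y"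
proof -
  have sub: "uball Y \<subseteq> uball UNIV" by (auto simp: uball_def)
  have z: "\<forall>x. x \<notin> uball Y \<longrightarrow> restr (uball Y) g x = 0" by (simp add: restr_def)
  have eqY: "\<And>x. x \<in> uball Y \<Longrightarrow> restr (uball Y) g x = g x" by (simp add: restr_def)
  have img: "restr (uball Y) g ` uball Y \<subseteq> g ` uball UNIV" using sub eqY by auto
  have bd: "bounded (restr (uball Y) g ` uball Y)"
    using g img bounded_subset unfolding Au_def by blast
  have uc0: "uniformly_continuous_on (uball UNIV) g"
    using g unfolding Au_def by blast
  have uc: "uniformly_continuous_on (uball Y) (restr (uball Y) g)"
    by (rule uc_sub_cong[OF uc0 sub eqY])
  have ho: "holo_on sm Y (uball Y) (restr (uball Y) g)"
    unfolding holo_on_def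
  proof
    fix x assume xY: "x \<in> uball Y"
    then have xU: "x \<in> uball UNIV" using sub by auto
    from g xU obtain L where L: "L \<in> cdual sm UNIV"
      and lim: "((\<lambda>y. cmod (g y - g x - L (y - x)) / norm (y - x)) \<longlongrightarrow> 0) (at x within UNIV)"
      unfolding Au_def holo_on_def by blast
    have LY: "L \<in> cdual sm Y" using L unfolding cdual_def by blast
    have lim2: "((\<lambda>y. cmod (g y - g x - L (y - x)) / norm (y - x)) \<longlongrightarrow> 0) (at x within Y)"
      using lim tendsto_within_subset by blast
    have ev: "\<forall>\<^sub>F y in at x within Y. cmod (g y - g x - L (y - x)) / norm (y - x)
              = cmod (restr (uball Y) g y - restr (uball Y) g x - L (y - x)) / norm (y - x)"
    proof -
      have "x \<in> ball 0 1" using xY by (simp add: uball_def)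
      then have "\<forall>\<^sub>F y in at x within Y. y \<in> ball 0 1"
        by (meson eventually_at_topological open_ball)
      then have "\<forall>\<^sub>F y in at x within Y. y \<in> ball 0 1 \<and> y \<in> Y"
        by (simp add: eventually_at_filter eventually_conj_iff eventually_mono)
      then show ?thesis
        by (rule eventually_mono) (use xY in \<open>auto simp: restr_def uball_def\<close>)
    qed
    show "\<exists>L\<in>cdual sm Y. ((\<lambda>y. cmod (restr (uball Y) g y - restr (uball Y) g x - L (y - x)) / norm (y - x)) \<longlongrightarrow> 0) (at x within Y)"
      using LY tendsto_cong[OF ev] lim2 by blast
  qed
  show ?thesis using z bd uc ho unfolding Au_def by blast
qed

lemma one_Au: "restr (uball UNIV) (\<lambda>_. 1) \<in> Au sm UNIV"
proof -
  let ?e = "restr (uball UNIV) (\<lambda>_. 1::complex)"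
  have z: "\<forall>x. x \<notin> uball UNIV \<longrightarrow> ?e x = 0" by (simp add: restr_def)
  have img: "?e ` uball UNIV \<subseteq> {1}" by (auto simp: restr_def)
  have bd: "bounded (?e ` uball UNIV)" by (rule bounded_subset[OF _ img]) simp
  have uc: "uniformly_continuous_on (uball UNIV) ?e"
    by (rule uc_sub_cong[OF uniformly_continuous_on_const[of _ "1::complex"]])
       (auto simp: restr_def)
  have c0: "(\<lambda>_. 0::complex) \<in> cdual sm UNIV" unfolding cdual_def by (auto intro: exI[of _ 0])
  have ho: "holo_on sm UNIV (uball UNIV) ?e"
    unfolding holo_on_def
  proof
    fix x :: 'a assume xU: "x \<in> uball UNIV"
    have "x \<in> ball 0 1" using xU by (simp add: uball_def)
    then have "\<forall>\<^sub>F y in at x within UNIV. y \<in> ball 0 1"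
      by (meson eventually_at_topological open_ball)
    then have ev: "\<forall>\<^sub>F y in at x within UNIV. 0 = cmod (?e y - ?e x - 0) / norm (y - x)"
      by (rule eventually_mono) (use xU in \<open>auto simp: restr_def uball_def\<close>)
    have "((\<lambda>y. cmod (?e y - ?e x - (\<lambda>_. 0) (y - x)) / norm (y - x)) \<longlongrightarrow> 0) (at x within UNIV)"
      using tendsto_cong[OF ev, THEN iffD1, OF tendsto_const] by simp
    then show "\<exists>L\<in>cdual sm UNIV. ((\<lambda>y. cmod (?e y - ?e x - L (y - x)) / norm (y - x)) \<longlongrightarrow> 0) (at x within UNIV)"
      by (intro bexI[OF _ c0]) simp
  qed
  show ?thesis using z bd uc ho unfolding Au_def by blast
qed

theorem proposition2p8:
  fixes sm :: "complex \<Rightarrow> 'a::banach \<Rightarrow> 'a" and Y :: "'a set" and f :: "'a \<Rightarrow> complex"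
  assumes "complex_scaling sm"
    and "complex_subspace sm Y" and "closed Y"
    and "f \<in> Au sm UNIV"
  shows "(\<lambda>\<tau>. \<tau> (restr (uball Y) f)) ` M0 sm Y \<subseteq> (\<lambda>\<tau>. \<tau> f) ` M0 sm UNIV"
proof
  fix w assume "w \<in> (\<lambda>\<tau>. \<tau> (restr (uball Y) f)) ` M0 sm Y"
  then obtain \<tau> where t: "\<tau> \<in> M0 sm Y" and w: "w = \<tau> (restr (uball Y) f)" by blast
  define \<sigma> where "\<sigma> = (\<lambda>g. \<tau> (restr (uball Y) g))"
  have add: "\<And>g h. restr (uball Y) (\<lambda>x. g x + h x) = (\<lambda>x. restr (uball Y) g x + restr (uball Y) h x)"
    by (auto simp: restr_def)
  have mul: "\<And>g h. restr (uball Y) (\<lambda>x. g x * h x) = (\<lambda>x. restr (uball Y) g x * restr (uball Y) h x)"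
    by (auto simp: restr_def)
  have sc: "\<And>c g. restr (uball Y) (\<lambda>x. c * g x) = (\<lambda>x. c * restr (uball Y) g x)"
    by (auto simp: restr_def)
  have t1: "\<And>g h. g \<in> Au sm Y \<Longrightarrow> h \<in> Au sm Y \<Longrightarrow>
     \<tau> (\<lambda>x. g x + h x) = \<tau> g + \<tau> h \<and> \<tau> (\<lambda>x. g x * h x) = \<tau> g * \<tau> h"
    using t unfolding M0_def by blast
  have t2: "\<And>c g. g \<in> Au sm Y \<Longrightarrow> \<tau> (\<lambda>x. c * g x) = c * \<tau> g"
    using t unfolding M0_def by blast
  have m1: "\<forall>g\<in>Au sm UNIV. \<forall>h\<in>Au sm UNIV. \<sigma> (\<lambda>x. g x + h x) = \<sigma> g + \<sigma> h \<and> \<sigma> (\<lambda>x. g x * h x) = \<sigma> g * \<sigma> h"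
  proof (intro ballI)
    fix g h assume "g \<in> Au sm UNIV" "h \<in> Au sm UNIV"
    then have "restr (uball Y) g \<in> Au sm Y" "restr (uball Y) h \<in> Au sm Y" by (auto intro: restr_Au)
    from t1[OF this] show "\<sigma> (\<lambda>x. g x + h x) = \<sigma> g + \<sigma> h \<and> \<sigma> (\<lambda>x. g x * h x) = \<sigma> g * \<sigma> h"
      unfolding \<sigma>_def add mul .
  qed
  have m2: "\<forall>c. \<forall>g\<in>Au sm UNIV. \<sigma> (\<lambda>x. c * g x) = c * \<sigma> g"
  proof (intro allI ballI)
    fix c g assume "g \<in> Au sm UNIV"
    then have "restr (uball Y) g \<in> Au sm Y" by (rule restr_Au)
    from t2[OF this] show "\<sigma> (\<lambda>x. c * g x) = c * \<sigma> g" unfolding \<sigma>_def sc .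
  qed
  obtain f0 where f0: "f0 \<in> Au sm Y" "\<tau> f0 \<noteq> 0" using t unfolding M0_def by blast
  define eY where "eY = restr (uball Y) (restr (uball UNIV) (\<lambda>_. 1::complex))"
  have eY: "eY \<in> Au sm Y" unfolding eY_def by (rule restr_Au[OF one_Au])
  have "(\<lambda>x. f0 x * eY x) = f0"
  proof
    fix x show "f0 x * eY x = f0 x"
      using f0(1) by (cases "x \<in> uball Y") (auto simp: eY_def restr_def Au_def uball_def)
  qed
  moreover have "\<tau> (\<lambda>x. f0 x * eY x) = \<tau> f0 * \<tau> eY" using t1[OF f0(1) eY] by blast
  ultimately have "\<tau> f0 = \<tau> f0 * \<tau> eY" by simp
  then have "\<sigma> (restr (uball UNIV) (\<lambda>_. 1)) \<noteq> 0" using f0(2) unfolding \<sigma>_def eY_def by auto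
  then have m3: "\<exists>g\<in>Au sm UNIV. \<sigma> g \<noteq> 0" using one_Au by blast
  have m4: "\<forall>\<phi>\<in>cdual sm UNIV. \<sigma> (restr (uball UNIV) \<phi>) = 0"
  proof
    fix \<phi> assume p: "\<phi> \<in> cdual sm UNIV"
    have "\<phi> \<in> cdual sm Y" using p unfolding cdual_def by blast
    moreover have "restr (uball Y) (restr (uball UNIV) \<phi>) = restr (uball Y) \<phi>"
      by (auto simp: restr_def uball_def)
    ultimately show "\<sigma> (restr (uball UNIV) \<phi>) = 0" using t unfolding \<sigma>_def M0_def by auto
  qed
  have "\<sigma> \<in> M0 sm UNIV" unfolding M0_def using m1 m2 m3 m4 by (intro CollectI conjI)
  moreover have "w = \<sigma> f" using w \<sigma>_def by simp
  ultimately show "w \<in> (\<lambda>\<tau>. \<tau> f) ` M0 sm UNIV" by blast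
qed

end
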